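(* Let $\alpha>0$ and $g,h\in\mathbb{R}$ with $h>g$ and $g\neq 1$, and put $\gamma=h-g$, $\lambda=1-g$. Suppose there is an integer $N\geq 1$ with $N\gamma-g=-1$. Let $F_0\in(0,1)$ and $X_0\in\mathbb{R}$, and let $F$ be a differentiable function on an interval $I\ni X_0$ with values in $(0,1)$ satisfying $$\frac{dF}{dX}=\alpha\,(F^g-F^h),\qquad F(X_0)=F_0 .$$ Then for every $X\in I$, writing $F=F(X)$, $$X=X_0+\frac{1}{\alpha}\left[\ln\!\left(\frac{F}{F_0}\right)+\sum_{k=0,\,k\neq N}^{\infty}\frac{F^{k\gamma+\lambda}-F_0^{k\gamma+\lambda}}{k\gamma+\lambda}\right].$$
   Context: The equation $dF/dX=\alpha(F^g-F^h)$ with $\alpha>0$, $h>g$ defines the S-distribution ($F$ the cumulative distribution function). The existence of such an $N$ is equivalent to $g>1$ and $h=(1+N^{-1})g-N^{-1}$. *)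

theory Defs
  imports "HOL-Analysis.Analysis"
begin

end

theory Submission
  imports Defs
begin

theorem mainTheorem3:
  fixes \<alpha> g h F0 X0 :: real and N :: nat and I :: "real set" and F :: "real \<Rightarrow> real"
  assumes alpha_pos: "\<alpha> > 0"
    and hg: "h > g" and g1: "g \<noteq> 1"
    and N1: "N \<ge> 1" and NC: "real N * (h - g) - g = -1"
    and F0: "0 < F0" "F0 < 1"
    and I: "is_interval I" "X0 \<in> I"
    and Frange: "\<And>x. x \<in> I \<Longrightarrow> 0 < F x \<and> F x < 1"
    and ode: "\<And>x. x \<in> I \<Longrightarrow>
       (F has_real_derivative \<alpha> * (F x powr g - F x powr h)) (at x within I)"
    and init: "F X0 = F0"
    and X: "X \<in> I"
  shows "\<exists>S. (\<lambda>k::nat. if k = N then 0 else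
             (F X powr (real k * (h - g) + (1 - g)) - F0 powr (real k * (h - g) + (1 - g)))
               / (real k * (h - g) + (1 - g))) sums S
           \<and> X = X0 + (1 / \<alpha>) * (ln (F X / F0) + S)"
proof -
  define \<gamma> where "\<gamma> = h - g"
  have gpos: "\<gamma> > 0" using hg by (simp add: \<gamma>_def)
  define e where "e = (\<lambda>k::nat. real k * (h - g) + (1 - g))"
  have e_eq: "e k = (real k - real N) * \<gamma>" for k
    using NC by (simp add: e_def \<gamma>_def algebra_simps)
  have e_nz: "k < N \<Longrightarrow> e k \<noteq> 0" for k
    using gpos by (simp add: e_eq)
  have gN: "g = real N * \<gamma> + 1" using NC by (simp add: \<gamma>_def)
  define G where "G = (\<lambda>y. ln y + (\<Sum>k<N. y powr e k / e k) - ln (1 - y powr \<gamma>) / \<gamma>)"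
  define G' where "G' = (\<lambda>y. 1 / y + (\<Sum>k<N. y powr (e k - 1)) + y powr (\<gamma> - 1) / (1 - y powr \<gamma>))"
  have Gd: "(G has_real_derivative G' y) (at y)" if y: "0 < y" "y < 1" for y
  proof -
    have u1: "y powr \<gamma> < 1" using y gpos by (simp add: powr01_less_one)
    have ds: "((\<lambda>y. \<Sum>k<N. y powr e k / e k) has_real_derivative (\<Sum>k<N. e k * y powr (e k - 1) / e k)) (at y)"
      by (intro DERIV_sum DERIV_cdivide has_real_derivative_powr y(1))
    have dl: "((\<lambda>y. ln (1 - y powr \<gamma>)) has_real_derivative - (\<gamma> * y powr (\<gamma> - 1)) / (1 - y powr \<gamma>)) (at y)"
      by (rule derivative_eq_intros refl | simp add: y u1)+
    have "(G has_real_derivative 1 / y + (\<Sum>k<N. e k * y powr (e k - 1) / e k)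
            - (- (\<gamma> * y powr (\<gamma> - 1)) / (1 - y powr \<gamma>)) / \<gamma>) (at y)"
      unfolding G_def
      by (intro DERIV_add DERIV_diff DERIV_cdivide ds dl DERIV_ln_divide y(1))
    moreover have "1 / y + (\<Sum>k<N. e k * y powr (e k - 1) / e k)
            - (- (\<gamma> * y powr (\<gamma> - 1)) / (1 - y powr \<gamma>)) / \<gamma> = G' y"
    proof -
      have "(\<Sum>k<N. e k * y powr (e k - 1) / e k) = (\<Sum>k<N. y powr (e k - 1))"
        by (rule sum.cong) (auto simp: e_nz)
      moreover have "(- (\<gamma> * y powr (\<gamma> - 1)) / (1 - y powr \<gamma>)) / \<gamma>
          = - (y powr (\<gamma> - 1) / (1 - y powr \<gamma>))"
        using gpos u1 by (simp add: field_simps)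
      ultimately show ?thesis by (simp add: G'_def)
    qed
    ultimately show ?thesis by simp
  qed
  have key: "G' y * (\<alpha> * (y powr g - y powr h)) = \<alpha>" if y: "0 < y" "y < 1" for y
  proof -
    define u where "u = y powr \<gamma>"
    have u1: "u < 1" "0 < u" using y gpos powr01_less_one[of y \<gamma>] by (simp_all add: u_def)
    have hh: "h = g + \<gamma>" by (simp add: \<gamma>_def)
    have p1: "y powr (e k - 1) * y powr g = u ^ k" for k
    proof -
      have "y powr (e k - 1) * y powr g = y powr (real k * \<gamma>)"
        using y by (simp add: powr_add[symmetric] e_def \<gamma>_def algebra_simps)
      also have "\<dots> = u ^ k" using y
        by (simp add: u_def powr_powr[symmetric] powr_realpow mult.commute)
      finally show ?thesis .
    qed
    have p2: "y powr g = u ^ N * y"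
    proof -
      have "y powr g = y powr (real N * \<gamma>) * y powr 1" using y
        by (simp add: gN powr_add)
      also have "y powr (real N * \<gamma>) = u ^ N" using y
        by (simp add: u_def powr_powr[symmetric] powr_realpow mult.commute)
      finally show ?thesis using y by simp
    qed
    have p3: "y powr h = u ^ N * y * u"
      using y by (simp add: hh powr_add p2 u_def)
    have p4: "y powr (\<gamma> - 1) * y = u" using y
      by (simp add: u_def powr_diff)
    have geo: "(\<Sum>k<N. u ^ k) * (1 - u) = 1 - u ^ N"
      using u1 by (simp add: sum_gp_strict)
    have d: "y powr g - y powr h = u ^ N * y * (1 - u)" by (simp add: p2 p3 algebra_simps)
    have G'u: "G' y = 1 / y + (\<Sum>k<N. y powr (e k - 1)) + y powr (\<gamma> - 1) / (1 - u)"
      by (simp add: G'_def u_def)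
    have t1: "1 / y * (u ^ N * y * (1 - u)) = u ^ N * (1 - u)" using y by simp
    have t2: "(\<Sum>k<N. y powr (e k - 1)) * (u ^ N * y * (1 - u)) = (\<Sum>k<N. u ^ k) * (1 - u)"
    proof -
      have "(\<Sum>k<N. y powr (e k - 1)) * (u ^ N * y * (1 - u))
          = (\<Sum>k<N. y powr (e k - 1) * y powr g) * (1 - u)"
        unfolding p2 by (simp add: sum_distrib_right mult.assoc)
      also have "\<dots> = (\<Sum>k<N. u ^ k) * (1 - u)" by (simp only: p1)
      finally show ?thesis .
    qed
    have t3: "y powr (\<gamma> - 1) / (1 - u) * (u ^ N * y * (1 - u)) = u * u ^ N"
    proof -
      have "y powr (\<gamma> - 1) / (1 - u) * (u ^ N * y * (1 - u)) = (y powr (\<gamma> - 1) * y) * u ^ N"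
        using u1 by (simp add: field_simps)
      then show ?thesis by (simp only: p4)
    qed
    have "G' y * (y powr g - y powr h) = u ^ N * (1 - u) + (\<Sum>k<N. u ^ k) * (1 - u) + u * u ^ N"
      unfolding d G'u distrib_right t1 t2 t3 ..
    also have "\<dots> = u ^ N * (1 - u) + (1 - u ^ N) + u * u ^ N"
      by (simp add: geo)
    also have "\<dots> = 1" by (simp add: algebra_simps)
    finally show ?thesis by (simp add: algebra_simps)
  qed
  have "\<exists>c. \<forall>x\<in>I. G (F x) - \<alpha> * x = c"
  proof (rule has_field_derivative_zero_constant)
    show "convex I" using I(1) by (simp add: is_interval_convex)
    fix x assume x: "x \<in> I"
    have "((\<lambda>x. G (F x) - \<alpha> * x) has_real_derivative
           G' (F x) * (\<alpha> * (F x powr g - F x powr h)) - \<alpha> * 1) (at x within I)"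
      by (intro derivative_intros DERIV_chain'[OF ode[OF x]] Gd) (use Frange[OF x] in auto)
    then show "((\<lambda>x. G (F x) - \<alpha> * x) has_real_derivative 0) (at x within I)"
      using key[of "F x"] Frange[OF x] by simp
  qed
  then obtain c where c: "\<And>x. x \<in> I \<Longrightarrow> G (F x) - \<alpha> * x = c" by blast
  have Xeq: "X = X0 + (1 / \<alpha>) * (G (F X) - G F0)"
    using c[OF X] c[OF I(2)] init alpha_pos by (simp add: field_simps)
  define a where "a = F X"
  have a: "0 < a" "a < 1" using Frange[OF X] by (simp_all add: a_def)
  define A where "A = a powr \<gamma>"
  define B where "B = F0 powr \<gamma>"
  have A: "0 < A" "A < 1" using a gpos powr01_less_one[of a \<gamma>] by (simp_all add: A_def)
  have B: "0 < B" "B < 1" using F0 gpos powr01_less_one[of F0 \<gamma>] by (simp_all add: B_def)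
  define f where "f = (\<lambda>k::nat. if k = N then 0 else
             (F X powr (real k * (h - g) + (1 - g)) - F0 powr (real k * (h - g) + (1 - g)))
               / (real k * (h - g) + (1 - g)))"
  have fshift: "f (m + N) = (1 / \<gamma>) * ((- (B ^ m) / real m) - (- (A ^ m) / real m))" for m
  proof (cases "m = 0")
    case True then show ?thesis by (simp add: f_def)
  next
    case False
    have ee: "real (m + N) * (h - g) + (1 - g) = real m * \<gamma>"
      using e_eq[of "m+N"] by (simp add: e_def)
    have "a powr (real m * \<gamma>) = A ^ m" using a
      by (simp add: A_def powr_powr[symmetric] powr_realpow mult.commute)
    moreover have "F0 powr (real m * \<gamma>) = B ^ m" using F0
      by (simp add: B_def powr_powr[symmetric] powr_realpow mult.commute)
    moreover have "f (m + N) = (F X powr (real m * \<gamma>) - F0 powr (real m * \<gamma>)) / (real m * \<gamma>)"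
      unfolding f_def ee using False by simp
    ultimately have "f (m + N) = (A ^ m - B ^ m) / (real m * \<gamma>)" by (simp add: a_def)
    then show ?thesis using False gpos by (simp add: field_simps)
  qed
  have sA: "(\<lambda>n. - (A ^ n) / real n) sums ln (1 - A)"
    using ln_series'[of "-A"] A by simp
  have sB: "(\<lambda>n. - (B ^ n) / real n) sums ln (1 - B)"
    using ln_series'[of "-B"] B by simp
  have "(\<lambda>m. f (m + N)) sums ((1 / \<gamma>) * (ln (1 - B) - ln (1 - A)))"
    unfolding fshift by (intro sums_mult sums_diff sA sB)
  then have fs: "f sums ((1 / \<gamma>) * (ln (1 - B) - ln (1 - A)) + sum f {..<N})"
    by (simp add: sums_iff_shift)
  define S where "S = (1 / \<gamma>) * (ln (1 - B) - ln (1 - A)) + sum f {..<N}"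
  have sumf: "sum f {..<N} = (\<Sum>k<N. a powr e k / e k) - (\<Sum>k<N. F0 powr e k / e k)"
    by (simp add: sum_subtractf[symmetric] f_def e_def a_def diff_divide_distrib)
  have "G (F X) - G F0 = ln (F X / F0) + S"
    unfolding G_def S_def sumf a_def[symmetric] A_def B_def
    using a F0 gpos by (simp add: ln_div field_simps)
  then show ?thesis using fs Xeq unfolding f_def S_def by auto
qed

end
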